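(* In the setting where, for $i=1,\dots,n$, $f_i(x_i,\langle u,x_1,\dots,x_{i-1}\rangle)=\tanh(w_i x_i+\beta_i(u,x_1,\dots,x_{i-1}))$ with $w_i\ge0$ and $\beta_i$ continuous, fix $u\in U$, $i\in[n]$, $x_1,\dots,x_i\in\mathbb{R}$, and let $(x_{j,t})_{t\ge0}$ ($j\in[i]$) be defined by $x_{j,0}=x_j$, $x_{j,t}=f_j(x_{j,t-1},\langle u,x_{1,t-1},\dots,x_{j-1,t-1}\rangle)$. Let $x_{j,*}=\lim_{t\to\infty}x_{j,t}$ (which exists for every $j$). Then $x_{i,*}$ is a fixpoint of $h_{i,v}(x)=\tanh(w_i x+v)$, where $v=\beta_1(u)$ if $i=1$ and $v=\beta_i(u,x_{1,*},\dots,x_{i-1,*})$ if $i\ge2$.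
   Context: This concerns the sequence of states of the first $i$ neurons of an $\mathrm{RNC}_+$ (a cascade of recurrent tanh neurons with nonnegative recurrent weights $w_i$ and feedforward-network input functions $\beta_i$) when input $u$ is repeated. *)

theory Defs
  imports "HOL-Analysis.Analysis"
begin

text \<open>Neurons are indexed 1, 2, ...; a state is a vector nat => real whose entry j is
the state of neuron j.  The input to beta_j is (u, x_1, ..., x_{j-1}); we encode
the tuple x_1..x_{j-1} as a vector nat => real with all other entries set to 0.\<close>

definition prefix_mask :: "nat \<Rightarrow> (nat \<Rightarrow> real) \<Rightarrow> (nat \<Rightarrow> real)" where
  "prefix_mask j x = (\<lambda>k. if 1 \<le> k \<and> k < j then x k else 0)"

fun rnc_state :: "(nat \<Rightarrow> real) \<Rightarrow> (nat \<Rightarrow> 'u \<Rightarrow> (nat \<Rightarrow> real) \<Rightarrow> real) \<Rightarrow> 'u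
    \<Rightarrow> (nat \<Rightarrow> real) \<Rightarrow> nat \<Rightarrow> (nat \<Rightarrow> real)" where
  "rnc_state w \<beta> u x0 0 = x0"
| "rnc_state w \<beta> u x0 (Suc t) =
     (\<lambda>j. tanh (w j * rnc_state w \<beta> u x0 t j + \<beta> j u (prefix_mask j (rnc_state w \<beta> u x0 t))))"

end

theory Submission imports Defs begin
lemma tendsto_fun_comp:
  fixes f :: "'a \<Rightarrow> 'b \<Rightarrow> 'c::topological_space"
  assumes "\<And>k. ((\<lambda>t. f t k) \<longlongrightarrow> l k) F"
  shows "(f \<longlongrightarrow> l) F"
proof -
  have "limitin (product_topology (\<lambda>i. euclidean) UNIV) f l F"
    unfolding limitin_componentwise using assms by (simp add: limitin_canonical_iff)
  then show ?thesis by (simp add: euclidean_product_topology limitin_canonical_iff)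
qed

lemma nonfix_dense:
  fixes w v a b :: real
  assumes "a < b"
  shows "\<exists>z. a < z \<and> z < b \<and> tanh (w*z+v) \<noteq> z"
proof (rule ccontr)
  assume "\<not> ?thesis"
  then have fx: "\<And>z. z \<in> {a<..<b} \<Longrightarrow> tanh (w*z+v) = z" by auto
  have d: "w * (1 - z^2) = 1" if z: "z \<in> {a<..<b}" for z
  proof -
    have "((\<lambda>z. tanh (w*z+v)) has_field_derivative (1 - (tanh (w*z+v))\<^sup>2) * w) (at z)"
      by (rule has_field_derivative_tanh) (auto intro!: derivative_eq_intros simp: cosh_real_pos[THEN less_imp_neq, symmetric])
    then have "((\<lambda>z. z) has_field_derivative (1 - (tanh (w*z+v))\<^sup>2) * w) (at z)"
      by (rule has_field_derivative_transform_within_open[where S="{a<..<b}"]) (use z fx in auto)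
    moreover have "((\<lambda>z. z) has_field_derivative 1) (at z)" by (rule DERIV_ident)
    ultimately have "(1 - (tanh (w*z+v))\<^sup>2) * w = 1" using DERIV_unique by blast
    then show ?thesis using fx[OF z] by (simp add: algebra_simps)
  qed
  define z1 where "z1 = a + (b-a)/4"
  define z2 where "z2 = a + (b-a)/2"
  define z3 where "z3 = a + 3*(b-a)/4"
  have "z1 \<in> {a<..<b}" "z2 \<in> {a<..<b}" "z3 \<in> {a<..<b}"
    using assms by (auto simp: z1_def z2_def z3_def field_simps)
  then have "w * (1 - z1^2) = 1" "w * (1 - z2^2) = 1" "w * (1 - z3^2) = 1"
    using d by blast+
  then have w0: "w \<noteq> 0" by auto
  have "w - w * z1^2 = 1" "w - w * z2^2 = 1" "w - w * z3^2 = 1" using \<open>w * (1 - z1^2) = 1\<close> \<open>w * (1 - z2^2) = 1\<close> \<open>w * (1 - z3^2) = 1\<close>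
    by (simp_all add: right_diff_distrib)
  then have "w * z1^2 = w * z2^2" "w * z2^2 = w*z3^2" by linarith+
  then have "z1^2 = z2^2" "z2^2 = z3^2" using w0 by simp_all
  then have "z1 = - z2" "z2 = - z3" using assms by (auto simp: z1_def z2_def z3_def power2_eq_iff)
  then show False using assms by (simp add: z1_def z3_def)
qed

lemma dich:
  fixes x v :: "nat \<Rightarrow> real" and w vs y :: real
  assumes w: "w \<ge> 0" and v: "v \<longlonglongrightarrow> vs"
    and rec: "\<And>t. x (Suc t) = tanh (w * x t + v t)"
    and ne: "tanh (w*y+vs) \<noteq> y"
  shows "eventually (\<lambda>t. y \<le> x t) sequentially \<or> eventually (\<lambda>t. x t \<le> y) sequentially"
proof -
  have lim: "(\<lambda>t. tanh (w*y + v t)) \<longlonglongrightarrow> tanh (w*y+vs)"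
    using cosh_real_pos[of "w*y+vs"] by (intro tendsto_intros v) auto
  have mono: "tanh (w*a + v t) \<le> tanh (w*b + v t)" if "a \<le> b" for a b t
    using that w by (simp add: tanh_real_le_iff mult_left_mono)
  show ?thesis
  proof (cases "tanh (w*y+vs) > y")
    case True
    have "eventually (\<lambda>t. tanh (w*y + v t) > y) sequentially"
      using order_tendstoD(1)[OF lim True] .
    then obtain N where N: "\<And>t. t \<ge> N \<Longrightarrow> tanh (w*y + v t) > y"
      by (auto simp: eventually_sequentially)
    show ?thesis
    proof (cases "\<exists>t0\<ge>N. y \<le> x t0")
      case True
      then obtain t0 where t0: "t0 \<ge> N" "y \<le> x t0" by auto
      have "y \<le> x t" if "t \<ge> t0" for t
        using that
      proof (induction t rule: dec_induct)
        case base then show ?case using t0 by simp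
      next
        case (step m)
        have "y < tanh (w*y + v m)" using N step t0 by simp
        also have "\<dots> \<le> tanh (w * x m + v m)" using mono step by simp
        finally show ?case using rec[of m] by simp
      qed
      then show ?thesis unfolding eventually_sequentially by blast
    next
      case False
      then show ?thesis unfolding eventually_sequentially by force
    qed
  next
    case False
    then have F: "tanh (w*y+vs) < y" using ne by simp
    have "eventually (\<lambda>t. tanh (w*y + v t) < y) sequentially"
      using order_tendstoD(2)[OF lim F] .
    then obtain N where N: "\<And>t. t \<ge> N \<Longrightarrow> tanh (w*y + v t) < y"
      by (auto simp: eventually_sequentially)
    show ?thesis
    proof (cases "\<exists>t0\<ge>N. x t0 \<le> y")
      case True
      then obtain t0 where t0: "t0 \<ge> N" "x t0 \<le> y" by auto
      have "x t \<le> y" if "t \<ge> t0" for t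
        using that
      proof (induction t rule: dec_induct)
        case base then show ?case using t0 by simp
      next
        case (step m)
        have "tanh (w * x m + v m) \<le> tanh (w*y + v m)" using mono step by simp
        also have "\<dots> < y" using N step t0 by simp
        finally show ?case using rec[of m] by simp
      qed
      then show ?thesis unfolding eventually_sequentially by blast
    next
      case False
      then show ?thesis unfolding eventually_sequentially by force
    qed
  qed
qed

lemma conv:
  fixes x v :: "nat \<Rightarrow> real" and w vs :: real
  assumes w: "w \<ge> 0" and v: "v \<longlonglongrightarrow> vs"
    and rec: "\<And>t. x (Suc t) = tanh (w * x t + v t)"
  shows "convergent x"
proof -
  define M where "M = max 1 \<bar>x 0\<bar>"
  have bnd: "\<bar>x t\<bar> \<le> M" for t
  proof (cases t)
    case 0 then show ?thesis by (simp add: M_def)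
  next
    case (Suc s)
    have "\<bar>x t\<bar> = tanh \<bar>w * x s + v s\<bar>" using rec[of s] Suc by (simp add: tanh_real_abs)
    also have "\<dots> < 1" by (rule tanh_real_lt_1)
    finally show ?thesis by (simp add: M_def)
  qed
  define A where "A = {y. eventually (\<lambda>t. y \<le> x t) sequentially}"
  have "-M \<in> A" unfolding A_def by (auto intro!: always_eventually) (metis bnd abs_le_iff minus_le_iff)
  then have Ane: "A \<noteq> {}" by auto
  have Aub: "y \<le> M" if yA: "y \<in> A" for y
  proof -
    obtain N where "\<And>t. t \<ge> N \<Longrightarrow> y \<le> x t" using yA by (auto simp: A_def eventually_sequentially)
    then have "y \<le> x N" by simp
    then show ?thesis using bnd[of N] by (simp add: abs_le_iff)
  qed
  then have bdd: "bdd_above A" by (rule bdd_aboveI)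
  define l where "l = Sup A"
  have "x \<longlonglongrightarrow> l"
  proof (rule order_tendstoI)
    fix a assume "a < l"
    then obtain y where "y \<in> A" "a < y" using less_cSup_iff[OF Ane bdd] l_def by auto
    then show "eventually (\<lambda>t. a < x t) sequentially"
      unfolding A_def by (auto elim: eventually_mono)
  next
    fix b assume "l < b"
    obtain z where z: "l < z" "z < b" "tanh (w*z+vs) \<noteq> z" using nonfix_dense[OF \<open>l < b\<close>] by blast
    have "z \<notin> A" using cSup_upper[OF _ bdd] z(1) l_def by force
    then have "eventually (\<lambda>t. x t \<le> z) sequentially"
      using dich[OF w v rec z(3)] by (auto simp: A_def)
    then show "eventually (\<lambda>t. x t < b) sequentially"
      using z(2) by (auto elim: eventually_mono)
  qed
  then show ?thesis by (auto simp: convergent_def)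
qed

theorem proposition5:
  fixes n i :: nat
    and w :: "nat \<Rightarrow> real"
    and \<beta> :: "nat \<Rightarrow> 'u::topological_space \<Rightarrow> (nat \<Rightarrow> real) \<Rightarrow> real"
    and u :: 'u
    and x0 :: "nat \<Rightarrow> real"
  assumes w_nonneg: "\<forall>j\<in>{1..n}. w j \<ge> 0"
    and \<beta>_cont: "\<forall>j\<in>{1..n}. continuous_on UNIV (\<lambda>p. \<beta> j (fst p) (snd p))"
    and i: "i \<in> {1..n}"
  shows "(\<forall>j\<in>{1..i}. convergent (\<lambda>t. rnc_state w \<beta> u x0 t j)) \<and>
         (let xs = (\<lambda>j. lim (\<lambda>t. rnc_state w \<beta> u x0 t j))
          in xs i = tanh (w i * xs i + \<beta> i u (prefix_mask i xs)))"
proof -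
  define S where "S = rnc_state w \<beta> u x0"
  define xs where "xs = (\<lambda>j. lim (\<lambda>t. S t j))"
  have rec: "S (Suc t) j = tanh (w j * S t j + \<beta> j u (prefix_mask j (S t)))" for t j
    by (simp add: S_def)
  have vl: "(\<lambda>t. \<beta> j u (prefix_mask j (S t))) \<longlonglongrightarrow> \<beta> j u (prefix_mask j xs)"
    if jn: "j \<in> {1..n}" and IH: "\<And>k. 1 \<le> k \<Longrightarrow> k < j \<Longrightarrow> convergent (\<lambda>t. S t k)" for j
  proof -
    have pm: "(\<lambda>t. prefix_mask j (S t)) \<longlonglongrightarrow> prefix_mask j xs"
    proof (rule tendsto_fun_comp)
      fix k
      show "((\<lambda>t. prefix_mask j (S t) k) \<longlonglongrightarrow> prefix_mask j xs k)"
      proof (cases "1 \<le> k \<and> k < j")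
        case True
        then have "(\<lambda>t. S t k) \<longlonglongrightarrow> xs k" using IH convergent_LIMSEQ_iff xs_def by blast
        then show ?thesis using True by (simp add: prefix_mask_def)
      next
        case False
        then have "(\<lambda>t. prefix_mask j (S t) k) = (\<lambda>t. 0)" "prefix_mask j xs k = 0"
          by (auto simp: prefix_mask_def)
        then show ?thesis by simp
      qed
    qed
    have "continuous_on UNIV (\<lambda>p. \<beta> j (fst p) (snd p))"
      using \<beta>_cont jn by blast
    from continuous_on_tendsto_compose[OF this tendsto_Pair[OF tendsto_const pm]]
    show ?thesis by simp
  qed
  have cv: "convergent (\<lambda>t. S t j)" if "1 \<le> j" "j \<le> i" for j
    using that
  proof (induction j rule: less_induct)
    case (less j)
    have jn: "j \<in> {1..n}" using less.prems i by auto
    have vj: "(\<lambda>t. \<beta> j u (prefix_mask j (S t))) \<longlonglongrightarrow> \<beta> j u (prefix_mask j xs)"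
      by (rule vl[OF jn]) (use less in auto)
    show ?case by (rule conv[OF _ vj, where x="\<lambda>t. S t j" and w="w j"]) (use w_nonneg jn rec in auto)
  qed
  have vi: "(\<lambda>t. \<beta> i u (prefix_mask i (S t))) \<longlonglongrightarrow> \<beta> i u (prefix_mask i xs)"
    by (rule vl[OF i]) (use cv in auto)
  have ci: "(\<lambda>t. S t i) \<longlonglongrightarrow> xs i" using cv i convergent_LIMSEQ_iff xs_def by auto
  have l1: "(\<lambda>t. S (Suc t) i) \<longlonglongrightarrow> xs i" using LIMSEQ_Suc[OF ci] .
  have l2: "(\<lambda>t. S (Suc t) i) \<longlonglongrightarrow> tanh (w i * xs i + \<beta> i u (prefix_mask i xs))"
    unfolding rec using cosh_real_pos[of "w i * xs i + \<beta> i u (prefix_mask i xs)"]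
    by (intro tendsto_intros ci vi) auto
  have "xs i = tanh (w i * xs i + \<beta> i u (prefix_mask i xs))" using LIMSEQ_unique[OF l1 l2] .
  then show ?thesis using cv unfolding S_def xs_def by (auto simp: Let_def)
qed

end
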